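(* Let $\{Y_x\}_{x\in\mathcal{X}}$ be a Gaussian process with prior mean $\mu_x$ and prior covariance $\sigma_{xx'}$. Let $\mathcal{D}\subset\mathcal{X}$ be a finite set of inputs with observed outputs $y_{\mathcal{D}}$, partitioned into pairwise disjoint sets $\mathcal{D}_1,\ldots,\mathcal{D}_M$ with $|\mathcal{D}_m|=|\mathcal{D}|/M$, and let $\mathcal{U}\subseteq\mathcal{X}\setminus\mathcal{D}$ be a finite set of test inputs. Let $\sigma_n^2>0$ and let $F\in\mathbb{R}^{R\times|\mathcal{D}|}$ be the (upper triangular) incomplete Cholesky factor used to approximate $\Sigma_{\mathcal{D}\mathcal{D}}\approx F^\top F+\sigma_n^2 I$, written columnwise as $F=(F_1\cdots F_M)$ with $F_m\in\mathbb{R}^{R\times|\mathcal{D}_m|}$ the columns corresponding to $\mathcal{D}_m$. For $m=1,\ldots,M$ define $\dot{y}_m\triangleq F_m(y_{\mathcal{D}_m}-\mu_{\mathcal{D}_m})$, $\dot{\Sigma}_m\triangleq F_m\Sigma_{\mathcal{D}_m\mathcal{U}}$, $\Phi_m\triangleq F_mF_m^\top$; let $\Phi\triangleq I+\sigma_n^{-2}\sum_{m=1}^M\Phi_m$, $\ddot{y}\triangleq\Phi^{-1}\sum_{m=1}^M\dot{y}_m$, $\ddot{\Sigma}\triangleq\Phi^{-1}\sum_{m=1}^M\dot{\Sigma}_m$; let $\widetilde{\mu}^m_{\mathcal{U}}\triangleq\sigma_n^{-2}\Sigma_{\mathcal{U}\mathcal{D}_m}(y_{\mathcal{D}_m}-\mu_{\mathcal{D}_m})-\sigma_n^{-4}\dot{\Sigma}_m^\top\ddot{y}$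 and $\widetilde{\Sigma}^m_{\mathcal{U}\mathcal{U}}\triangleq\sigma_n^{-2}\Sigma_{\mathcal{U}\mathcal{D}_m}\Sigma_{\mathcal{D}_m\mathcal{U}}-\sigma_n^{-4}\dot{\Sigma}_m^\top\ddot{\Sigma}$; and let $\widetilde{\mu}_{\mathcal{U}}\triangleq\mu_{\mathcal{U}}+\sum_{m=1}^M\widetilde{\mu}^m_{\mathcal{U}}$ and $\widetilde{\Sigma}_{\mathcal{U}\mathcal{U}}\triangleq\Sigma_{\mathcal{U}\mathcal{U}}-\sum_{m=1}^M\widetilde{\Sigma}^m_{\mathcal{U}\mathcal{U}}$. Let $\mu^{\mathrm{ICF}}_{\mathcal{U}|\mathcal{D}}\triangleq\mu_{\mathcal{U}}+\Sigma_{\mathcal{U}\mathcal{D}}(F^\top F+\sigma_n^2I)^{-1}(y_{\mathcal{D}}-\mu_{\mathcal{D}})$ and $\Sigma^{\mathrm{ICF}}_{\mathcal{U}\mathcal{U}|\mathcal{D}}\triangleq\Sigma_{\mathcal{U}\mathcal{U}}-\Sigma_{\mathcal{U}\mathcal{D}}(F^\top F+\sigma_n^2I)^{-1}\Sigma_{\mathcal{D}\mathcal{U}}$. Then $\widetilde{\mu}_{\mathcal{U}}=\mu^{\mathrm{ICF}}_{\mathcal{U}|\mathcal{D}}$ and $\widetilde{\Sigma}_{\mathcal{U}\mathcal{U}}=\Sigma^{\mathrm{ICF}}_{\mathcal{U}\mathcal{U}|\mathcal{D}}$.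
   Context: For finite sets $\mathcal{A},\mathcal{B}\subset\mathcal{X}$, $\mu_{\mathcal{A}}$ denotes the column vector of prior means $\mu_x$, $x\in\mathcal{A}$, and $\Sigma_{\mathcal{A}\mathcal{B}}$ the matrix of prior covariances $\sigma_{xx'}$, $x\in\mathcal{A}$, $x'\in\mathcal{B}$; $\Sigma_{\mathcal{B}\mathcal{A}}$ is its transpose. Vectors and matrices indexed by $\mathcal{D}$ are ordered consistently with the partition $\mathcal{D}_1,\ldots,\mathcal{D}_M$ (the same ordering as the columns of $F$). $I$ denotes an identity matrix of the appropriate size. *)

theory Defs
  imports "Jordan_Normal_Form.Gauss_Jordan_Elimination"
begin

definition cov_kernel :: "('x \<Rightarrow> 'x \<Rightarrow> real) \<Rightarrow> bool" where
  "cov_kernel \<sigma> \<longleftrightarrow> (\<forall>x x'. \<sigma> x x' = \<sigma> x' x) \<and>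
     (\<forall>(xs :: 'x list) (c :: nat \<Rightarrow> real).
        (\<Sum>i<length xs. \<Sum>j<length xs. c i * c j * \<sigma> (xs ! i) (xs ! j)) \<ge> 0)"

definition vec_on :: "('x \<Rightarrow> real) \<Rightarrow> 'x list \<Rightarrow> real vec" where
  "vec_on f xs = vec (length xs) (\<lambda>i. f (xs ! i))"

definition cov_mat :: "('x \<Rightarrow> 'x \<Rightarrow> real) \<Rightarrow> 'x list \<Rightarrow> 'x list \<Rightarrow> real mat" where
  "cov_mat \<sigma> as bs = mat (length as) (length bs) (\<lambda>(i, j). \<sigma> (as ! i) (bs ! j))"

definition col_block :: "real mat \<Rightarrow> nat \<Rightarrow> nat \<Rightarrow> real mat" where
  "col_block F off n = mat (dim_row F) n (\<lambda>(i, j). F $$ (i, off + j))"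

definition minv :: "real mat \<Rightarrow> real mat" where
  "minv A = the (mat_inverse A)"

fun msum :: "nat \<Rightarrow> nat \<Rightarrow> (nat \<Rightarrow> real mat) \<Rightarrow> nat \<Rightarrow> real mat" where
  "msum nr nc f 0 = 0\<^sub>m nr nc"
| "msum nr nc f (Suc k) = msum nr nc f k + f k"

fun vsum :: "nat \<Rightarrow> (nat \<Rightarrow> real vec) \<Rightarrow> nat \<Rightarrow> real vec" where
  "vsum n f 0 = 0\<^sub>v n"
| "vsum n f (Suc k) = vsum n f k + f k"

end

theory Submission
  imports Defs "Jordan_Normal_Form.Determinant"
begin


definition row_block :: "real mat \<Rightarrow> nat \<Rightarrow> nat \<Rightarrow> real mat" where
  "row_block B off n = mat n (dim_col B) (\<lambda>(i, j). B $$ (off + i, j))"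
definition vblock :: "real vec \<Rightarrow> nat \<Rightarrow> nat \<Rightarrow> real vec" where
  "vblock v off n = vec n (\<lambda>i. v $ (off + i))"

lemma col_block_carrier[simp]: "col_block A off L \<in> carrier_mat (dim_row A) L"
  by (simp add: col_block_def)
lemma row_block_carrier[simp]: "row_block A off L \<in> carrier_mat L (dim_col A)"
  by (simp add: row_block_def)
lemma vblock_carrier[simp]: "vblock v off L \<in> carrier_vec L"
  by (simp add: vblock_def)

lemma block_mult_entry:
  assumes "i < dim_row A" "j < dim_col B"
  shows "(col_block A off L * row_block B off L) $$ (i,j) = (\<Sum>t<L. A$$(i,off+t) * B$$(off+t,j))"
  using assms by (simp add: col_block_def row_block_def scalar_prod_def atLeast0LessThan)

lemma block_mult_vec_entry:
  assumes "i < dim_row A"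
  shows "(col_block A off L *\<^sub>v vblock v off L) $ i = (\<Sum>t<L. A$$(i,off+t) * v$(off+t))"
  using assms by (simp add: col_block_def vblock_def scalar_prod_def atLeast0LessThan)

lemma sum_split_shift: "(\<Sum>t<a+b. f t) = (\<Sum>t<a. f t) + (\<Sum>t<b. f (a+t::nat))"
  by (induct b) (auto simp: add.assoc)

lemma msum_block:
  fixes L :: "nat \<Rightarrow> nat"
  assumes A: "dim_row A = nr" and B: "dim_col B = nc"
  shows "msum nr nc (\<lambda>m. col_block A (\<Sum>i<m. L i) (L m) * row_block B (\<Sum>i<m. L i) (L m)) k
     = col_block A 0 (\<Sum>i<k. L i) * row_block B 0 (\<Sum>i<k. L i)"
proof (induct k)
  case 0
  then show ?case using A B by (auto simp: col_block_def row_block_def)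
next
  case (Suc k)
  show ?case
  proof (rule eq_matI)
    fix i j assume ij: "i < dim_row (col_block A 0 (\<Sum>i<Suc k. L i) * row_block B 0 (\<Sum>i<Suc k. L i))"
       "j < dim_col (col_block A 0 (\<Sum>i<Suc k. L i) * row_block B 0 (\<Sum>i<Suc k. L i))"
    hence i: "i < dim_row A" and j: "j < dim_col B" by (auto simp: col_block_def row_block_def)
    show "msum nr nc (\<lambda>m. col_block A (\<Sum>i<m. L i) (L m) * row_block B (\<Sum>i<m. L i) (L m)) (Suc k) $$ (i, j) =
         (col_block A 0 (\<Sum>i<Suc k. L i) * row_block B 0 (\<Sum>i<Suc k. L i)) $$ (i, j)"
      using i j A B
      by (simp add: Suc block_mult_entry sum_split_shift del: mult_mat_vec_def)
         (simp add: col_block_def row_block_def scalar_prod_def atLeast0LessThan)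
  qed (use A B in \<open>auto simp: col_block_def row_block_def\<close>)
qed

lemma vsum_block:
  fixes L :: "nat \<Rightarrow> nat"
  assumes A: "dim_row A = nr"
  shows "vsum nr (\<lambda>m. col_block A (\<Sum>i<m. L i) (L m) *\<^sub>v vblock v (\<Sum>i<m. L i) (L m)) k
     = col_block A 0 (\<Sum>i<k. L i) *\<^sub>v vblock v 0 (\<Sum>i<k. L i)"
proof (induct k)
  case 0
  then show ?case using A by (auto simp: col_block_def vblock_def)
next
  case (Suc k)
  show ?case
  proof (rule eq_vecI)
    fix i assume "i < dim_vec (col_block A 0 (\<Sum>i<Suc k. L i) *\<^sub>v vblock v 0 (\<Sum>i<Suc k. L i))"
    hence i: "i < dim_row A" by (auto simp: col_block_def)
    show "vsum nr (\<lambda>m. col_block A (\<Sum>i<m. L i) (L m) *\<^sub>v vblock v (\<Sum>i<m. L i) (L m)) (Suc k) $ i =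
         (col_block A 0 (\<Sum>i<Suc k. L i) *\<^sub>v vblock v 0 (\<Sum>i<Suc k. L i)) $ i"
      using i A
      by (simp add: Suc block_mult_vec_entry sum_split_shift)
         (simp add: col_block_def vblock_def scalar_prod_def atLeast0LessThan)
  qed (use A in \<open>auto simp: col_block_def vblock_def\<close>)
qed




lemma msum_carrier: "(\<And>m. m < k \<Longrightarrow> f m \<in> carrier_mat nr nc) \<Longrightarrow> msum nr nc f k \<in> carrier_mat nr nc"
  by (induct k) auto

lemma msum_index: "(\<And>m. m < k \<Longrightarrow> f m \<in> carrier_mat nr nc) \<Longrightarrow> i < nr \<Longrightarrow> j < nc \<Longrightarrow>
   msum nr nc f k $$ (i,j) = (\<Sum>m<k. f m $$ (i,j))"
proof (induct k)
  case (Suc k)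
  have a: "msum nr nc f k \<in> carrier_mat nr nc" using Suc.prems by (intro msum_carrier) auto
  have b: "f k \<in> carrier_mat nr nc" using Suc.prems by auto
  have "msum nr nc f (Suc k) $$ (i,j) = msum nr nc f k $$ (i,j) + f k $$ (i,j)"
    using a b Suc.prems(2,3) by simp
  then show ?case using Suc by simp
qed auto

lemma vsum_carrier: "(\<And>m. m < k \<Longrightarrow> f m \<in> carrier_vec nr) \<Longrightarrow> vsum nr f k \<in> carrier_vec nr"
  by (induct k) auto

lemma vsum_index: "(\<And>m. m < k \<Longrightarrow> f m \<in> carrier_vec nr) \<Longrightarrow> i < nr \<Longrightarrow>
   vsum nr f k $ i = (\<Sum>m<k. f m $ i)"
proof (induct k)
  case (Suc k)
  have a: "vsum nr f k \<in> carrier_vec nr" using Suc.prems by (intro vsum_carrier) auto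
  have b: "f k \<in> carrier_vec nr" using Suc.prems by auto
  have "vsum nr f (Suc k) $ i = vsum nr f k $ i + f k $ i"
    using a b Suc.prems(2) by simp
  then show ?case using Suc by simp
qed auto

lemma msum_diff:
  assumes f: "\<And>m. m < k \<Longrightarrow> f m \<in> carrier_mat nr nc" and g: "\<And>m. m < k \<Longrightarrow> g m \<in> carrier_mat nr nc"
  shows "msum nr nc (\<lambda>m. a \<cdot>\<^sub>m f m - b \<cdot>\<^sub>m g m) k = a \<cdot>\<^sub>m msum nr nc f k - b \<cdot>\<^sub>m msum nr nc g k"
proof -
  have c1: "msum nr nc f k \<in> carrier_mat nr nc" "msum nr nc g k \<in> carrier_mat nr nc"
    using f g by (auto intro: msum_carrier)
  have cm: "\<And>m. m < k \<Longrightarrow> a \<cdot>\<^sub>m f m - b \<cdot>\<^sub>m g m \<in> carrier_mat nr nc"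
    using g by (intro minus_carrier_mat smult_carrier_mat)
  have c2: "msum nr nc (\<lambda>m. a \<cdot>\<^sub>m f m - b \<cdot>\<^sub>m g m) k \<in> carrier_mat nr nc"
    using cm by (rule msum_carrier)
  show ?thesis
  proof (rule eq_matI)
    fix i j assume "i < dim_row (a \<cdot>\<^sub>m msum nr nc f k - b \<cdot>\<^sub>m msum nr nc g k)"
      "j < dim_col (a \<cdot>\<^sub>m msum nr nc f k - b \<cdot>\<^sub>m msum nr nc g k)"
    hence ij: "i < nr" "j < nc" using c1 by auto
    have "msum nr nc (\<lambda>m. a \<cdot>\<^sub>m f m - b \<cdot>\<^sub>m g m) k $$ (i,j) = (\<Sum>m<k. (a \<cdot>\<^sub>m f m - b \<cdot>\<^sub>m g m) $$ (i,j))"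
      using cm ij by (rule msum_index)
    also have "\<dots> = (\<Sum>m<k. a * f m $$ (i,j) - b * g m $$ (i,j))"
      apply (rule sum.cong, simp)
      subgoal for m using f[of m] g[of m] ij by auto
      done
    also have "\<dots> = a * msum nr nc f k $$ (i,j) - b * msum nr nc g k $$ (i,j)"
      using msum_index[OF f ij] msum_index[OF g ij] by (simp add: sum_subtractf sum_distrib_left)
    also have "\<dots> = (a \<cdot>\<^sub>m msum nr nc f k - b \<cdot>\<^sub>m msum nr nc g k) $$ (i,j)"
      using c1 ij by simp
    finally show "msum nr nc (\<lambda>m. a \<cdot>\<^sub>m f m - b \<cdot>\<^sub>m g m) k $$ (i,j) = (a \<cdot>\<^sub>m msum nr nc f k - b \<cdot>\<^sub>m msum nr nc g k) $$ (i,j)" .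
  qed (use c1 c2 in auto)
qed

lemma vsum_diff:
  assumes f: "\<And>m. m < k \<Longrightarrow> f m \<in> carrier_vec nr" and g: "\<And>m. m < k \<Longrightarrow> g m \<in> carrier_vec nr"
  shows "vsum nr (\<lambda>m. a \<cdot>\<^sub>v f m - b \<cdot>\<^sub>v g m) k = a \<cdot>\<^sub>v vsum nr f k - b \<cdot>\<^sub>v vsum nr g k"
proof -
  have c1: "vsum nr f k \<in> carrier_vec nr" "vsum nr g k \<in> carrier_vec nr"
    using vsum_carrier[OF f] vsum_carrier[OF g] by auto
  have cm: "\<And>m. m < k \<Longrightarrow> a \<cdot>\<^sub>v f m - b \<cdot>\<^sub>v g m \<in> carrier_vec nr"
    using f g by simp
  have c2: "vsum nr (\<lambda>m. a \<cdot>\<^sub>v f m - b \<cdot>\<^sub>v g m) k \<in> carrier_vec nr"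
    using cm by (rule vsum_carrier)
  have d: "dim_vec (vsum nr f k) = nr" "dim_vec (vsum nr g k) = nr"
      "dim_vec (vsum nr (\<lambda>m. a \<cdot>\<^sub>v f m - b \<cdot>\<^sub>v g m) k) = nr"
    using c1 c2 by auto
  show ?thesis
  proof (rule eq_vecI)
    fix i assume "i < dim_vec (a \<cdot>\<^sub>v vsum nr f k - b \<cdot>\<^sub>v vsum nr g k)"
    hence ij: "i < nr" using d by simp
    have "vsum nr (\<lambda>m. a \<cdot>\<^sub>v f m - b \<cdot>\<^sub>v g m) k $ i = (\<Sum>m<k. (a \<cdot>\<^sub>v f m - b \<cdot>\<^sub>v g m) $ i)"
      using cm ij by (rule vsum_index)
    also have "\<dots> = (\<Sum>m<k. a * f m $ i - b * g m $ i)"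
      apply (rule sum.cong, simp)
      subgoal for m proof - assume "m \<in> {..<k}" hence "f m \<in> carrier_vec nr" "g m \<in> carrier_vec nr" using f g by auto thus ?thesis using ij by simp qed
      done
    also have "\<dots> = a * vsum nr f k $ i - b * vsum nr g k $ i"
      using vsum_index[OF f ij] vsum_index[OF g ij] by (simp add: sum_subtractf sum_distrib_left)
    also have "\<dots> = (a \<cdot>\<^sub>v vsum nr f k - b \<cdot>\<^sub>v vsum nr g k) $ i"
      using ij d by simp
    finally show "vsum nr (\<lambda>m. a \<cdot>\<^sub>v f m - b \<cdot>\<^sub>v g m) k $ i = (a \<cdot>\<^sub>v vsum nr f k - b \<cdot>\<^sub>v vsum nr g k) $ i" .
  qed (simp add: d)
qed

lemma msum_transpose_mult:
  assumes G: "\<And>m. m < k \<Longrightarrow> G m \<in> carrier_mat R n" and H: "H \<in> carrier_mat R p"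
  shows "msum n p (\<lambda>m. transpose_mat (G m) * H) k = transpose_mat (msum R n G k) * H"
proof -
  have c1: "msum R n G k \<in> carrier_mat R n" using G by (rule msum_carrier)
  have cm: "\<And>m. m < k \<Longrightarrow> transpose_mat (G m) * H \<in> carrier_mat n p"
  proof -
    fix m assume "m < k" hence "G m \<in> carrier_mat R n" by (rule G)
    thus "transpose_mat (G m) * H \<in> carrier_mat n p" using H by simp
  qed
  have c2: "msum n p (\<lambda>m. transpose_mat (G m) * H) k \<in> carrier_mat n p"
    using cm by (rule msum_carrier)
  show ?thesis
  proof (rule eq_matI)
    fix i j assume "i < dim_row (transpose_mat (msum R n G k) * H)" "j < dim_col (transpose_mat (msum R n G k) * H)"
    hence ij: "i < n" "j < p" using c1 H by auto
    have "msum n p (\<lambda>m. transpose_mat (G m) * H) k $$ (i,j) = (\<Sum>m<k. (transpose_mat (G m) * H) $$ (i,j))"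
      using cm ij by (rule msum_index)
    also have "\<dots> = (\<Sum>m<k. \<Sum>t<R. G m $$ (t,i) * H $$ (t,j))"
    proof (rule sum.cong)
      fix m assume "m \<in> {..<k}" hence Gm: "G m \<in> carrier_mat R n" using G by auto
      show "(transpose_mat (G m) * H) $$ (i,j) = (\<Sum>t<R. G m $$ (t,i) * H $$ (t,j))"
        using Gm H ij by (simp add: scalar_prod_def atLeast0LessThan)
    qed simp
    also have "\<dots> = (\<Sum>t<R. \<Sum>m<k. G m $$ (t,i) * H $$ (t,j))" by (rule sum.swap)
    also have "\<dots> = (\<Sum>t<R. msum R n G k $$ (t,i) * H $$ (t,j))"
    proof (rule sum.cong)
      fix t assume "t \<in> {..<R}" hence t: "t < R" by simp
      show "(\<Sum>m<k. G m $$ (t,i) * H $$ (t,j)) = msum R n G k $$ (t,i) * H $$ (t,j)"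
        using msum_index[OF G t ij(1)] by (simp add: sum_distrib_right)
    qed simp
    also have "\<dots> = (transpose_mat (msum R n G k) * H) $$ (i,j)"
      using c1 H ij by (simp add: scalar_prod_def atLeast0LessThan)
    finally show "msum n p (\<lambda>m. transpose_mat (G m) * H) k $$ (i,j) = (transpose_mat (msum R n G k) * H) $$ (i,j)" .
  qed (use c1 c2 H in auto)
qed



declare minus_carrier_mat[simp]

lemma wood:
  fixes F P :: "real mat"
  assumes F: "F \<in> carrier_mat R N" and P: "P \<in> carrier_mat R R" and s: "s \<noteq> 0"
    and inv: "(1\<^sub>m R + (1/s) \<cdot>\<^sub>m (F * transpose_mat F)) * P = 1\<^sub>m R"
  shows "(transpose_mat F * F + s \<cdot>\<^sub>m 1\<^sub>m N) * ((1/s) \<cdot>\<^sub>m 1\<^sub>m N - (1/s^2) \<cdot>\<^sub>m (transpose_mat F * P * F)) = 1\<^sub>m N"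
proof -
  define Ft where "Ft = transpose_mat F"
  have Ft: "Ft \<in> carrier_mat N R" using F by (simp add: Ft_def)
  define G where "G = F * Ft"
  have G: "G \<in> carrier_mat R R" using F Ft by (simp add: G_def)
  define Q where "Q = Ft * P * F"
  have Q: "Q \<in> carrier_mat N N" using F Ft P by (simp add: Q_def)
  have GP: "G * P \<in> carrier_mat R R" using G P by simp
  have inv': "P + (1/s) \<cdot>\<^sub>m (G * P) = 1\<^sub>m R"
  proof -
    have "1\<^sub>m R = (1\<^sub>m R + (1/s) \<cdot>\<^sub>m G) * P" using inv by (simp add: G_def Ft_def)
    also have "\<dots> = 1\<^sub>m R * P + ((1/s) \<cdot>\<^sub>m G) * P"
      using G P by (intro add_mult_distrib_mat[of _ R R]) auto
    also have "\<dots> = P + (1/s) \<cdot>\<^sub>m (G * P)"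
      using G P by (simp add: mult_smult_assoc_mat[of _ R R])
    finally show ?thesis by simp
  qed
  have GP_eq: "G * P = s \<cdot>\<^sub>m (1\<^sub>m R - P)"
  proof (rule eq_matI)
    fix i j assume ij: "i < dim_row (s \<cdot>\<^sub>m (1\<^sub>m R - P))" "j < dim_col (s \<cdot>\<^sub>m (1\<^sub>m R - P))"
    hence ij': "i < R" "j < R" using P by auto
    have "(P + (1/s) \<cdot>\<^sub>m (G * P)) $$ (i,j) = 1\<^sub>m R $$ (i,j)" using inv' by simp
    moreover have "(P + (1/s) \<cdot>\<^sub>m (G * P)) $$ (i,j) = P $$ (i,j) + (1/s) * (G*P) $$ (i,j)"
      using ij' G P by (simp add: carrier_matD[OF G] carrier_matD[OF P])
    ultimately have "P $$ (i,j) + (1/s) * (G*P) $$ (i,j) = 1\<^sub>m R $$ (i,j)" by simp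
    thus "(G * P) $$ (i,j) = (s \<cdot>\<^sub>m (1\<^sub>m R - P)) $$ (i,j)" using ij' P s
      by (simp add: field_simps)
  qed (use G P in auto)
  have FFQ: "(Ft * F) * Q = s \<cdot>\<^sub>m (Ft * F - Q)"
  proof -
    have "(Ft * F) * Q = Ft * ((G * P) * F)"
    proof -
      have PF: "P * F \<in> carrier_mat R N" using P F by simp
      have FtPF: "Ft * (P * F) \<in> carrier_mat N N" using Ft PF by simp
      have "(Ft * F) * Q = (Ft * F) * (Ft * (P * F))" unfolding Q_def using assoc_mult_mat[OF Ft P F] by simp
      also have "\<dots> = Ft * (F * (Ft * (P * F)))" using assoc_mult_mat[OF Ft F FtPF] .
      also have "F * (Ft * (P * F)) = (G * P) * F"
        unfolding G_def using assoc_mult_mat[OF F Ft P] assoc_mult_mat[OF F Ft PF] assoc_mult_mat[OF _ P F, of "F*Ft" R] F Ft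
        by simp
      finally show ?thesis .
    qed
    also have "\<dots> = Ft * (s \<cdot>\<^sub>m (F - P * F))"
    proof -
      have "(s \<cdot>\<^sub>m (1\<^sub>m R - P)) * F = s \<cdot>\<^sub>m ((1\<^sub>m R - P) * F)"
        using F P by (intro mult_smult_assoc_mat[of _ R R]) auto
      also have "(1\<^sub>m R - P) * F = 1\<^sub>m R * F - P * F"
        using F P by (intro minus_mult_distrib_mat[of _ R R]) auto
      finally show ?thesis unfolding GP_eq using F by simp
    qed
    also have "\<dots> = s \<cdot>\<^sub>m (Ft * F - Q)"
    proof -
      have PF: "P * F \<in> carrier_mat R N" using P F by simp
      have FPF: "F - P * F \<in> carrier_mat R N" using F PF by simp
      show ?thesis unfolding Q_def mult_smult_distrib[OF Ft FPF] mult_minus_distrib_mat[OF Ft F PF]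
        using assoc_mult_mat[OF Ft P F] by simp
    qed
    finally show ?thesis .
  qed
  have W: "(1/s) \<cdot>\<^sub>m 1\<^sub>m N - (1/s^2) \<cdot>\<^sub>m Q \<in> carrier_mat N N" using Q by simp
  have "(Ft * F + s \<cdot>\<^sub>m 1\<^sub>m N) * ((1/s) \<cdot>\<^sub>m 1\<^sub>m N - (1/s^2) \<cdot>\<^sub>m Q)
      = (Ft * F) * ((1/s) \<cdot>\<^sub>m 1\<^sub>m N - (1/s^2) \<cdot>\<^sub>m Q) + (s \<cdot>\<^sub>m 1\<^sub>m N) * ((1/s) \<cdot>\<^sub>m 1\<^sub>m N - (1/s^2) \<cdot>\<^sub>m Q)"
    using F Ft W by (simp add: add_mult_distrib_mat[of _ N N])
  also have "(Ft * F) * ((1/s) \<cdot>\<^sub>m 1\<^sub>m N - (1/s^2) \<cdot>\<^sub>m Q) = (1/s) \<cdot>\<^sub>m (Ft * F) - (1/s^2) \<cdot>\<^sub>m ((Ft*F) * Q)"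
  proof -
    have FF: "Ft * F \<in> carrier_mat N N" using Ft F by simp
    have a: "(1/s) \<cdot>\<^sub>m 1\<^sub>m N \<in> carrier_mat N N" "(1/s^2) \<cdot>\<^sub>m Q \<in> carrier_mat N N" using Q by auto
    show ?thesis unfolding mult_minus_distrib_mat[OF FF a] mult_smult_distrib[OF FF one_carrier_mat] mult_smult_distrib[OF FF Q] right_mult_one_mat[OF FF] ..
  qed
  also have "(s \<cdot>\<^sub>m 1\<^sub>m N) * ((1/s) \<cdot>\<^sub>m 1\<^sub>m N - (1/s^2) \<cdot>\<^sub>m Q) = s \<cdot>\<^sub>m ((1/s) \<cdot>\<^sub>m 1\<^sub>m N - (1/s^2) \<cdot>\<^sub>m Q)"
    using W by (simp add: mult_smult_assoc_mat[of _ N N] left_mult_one_mat[OF W])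
  also note FFQ
  also have "(1/s) \<cdot>\<^sub>m (Ft * F) - (1/s^2) \<cdot>\<^sub>m (s \<cdot>\<^sub>m (Ft * F - Q)) + s \<cdot>\<^sub>m ((1/s) \<cdot>\<^sub>m 1\<^sub>m N - (1/s^2) \<cdot>\<^sub>m Q) = 1\<^sub>m N"
    using F Ft Q s by (intro eq_matI) (auto simp: field_simps power2_eq_square)
  finally show ?thesis unfolding Ft_def Q_def .
qed


lemma smult_mat_vec:
  fixes A :: "real mat"
  assumes A: "A \<in> carrier_mat nr nc" and v: "v \<in> carrier_vec nc"
  shows "(k \<cdot>\<^sub>m A) *\<^sub>v v = k \<cdot>\<^sub>v (A *\<^sub>v v)"
  by (rule eq_vecI) (use A v in \<open>auto simp: scalar_prod_def sum_distrib_left ac_simps\<close>)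

lemma minv_props:
  fixes A :: "real mat"
  assumes A: "A \<in> carrier_mat n n" and d: "det A \<noteq> 0"
  shows "A * minv A = 1\<^sub>m n" "minv A * A = 1\<^sub>m n" "minv A \<in> carrier_mat n n"
proof -
  have U: "A \<in> Units (ring_mat TYPE(real) n ())" by (rule det_non_zero_imp_unit[OF A d])
  have "mat_inverse A \<noteq> None" using mat_inverse(1)[OF A, of "()"] U by auto
  then obtain B where B: "mat_inverse A = Some B" by auto
  have "minv A = B" unfolding minv_def B by simp
  thus "A * minv A = 1\<^sub>m n" "minv A * A = 1\<^sub>m n" "minv A \<in> carrier_mat n n"
    using mat_inverse(2)[OF A B] by auto
qed

lemma minv_eq:
  fixes A W :: "real mat"
  assumes A: "A \<in> carrier_mat n n" and W: "W \<in> carrier_mat n n" and AW: "A * W = 1\<^sub>m n"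
  shows "minv A = W"
proof -
  have "det A * det W = 1" using det_mult[OF A W] AW by simp
  hence d: "det A \<noteq> 0" by auto
  note p = minv_props[OF A d]
  have "minv A = minv A * (A * W)" using AW p(3) by simp
  also have "\<dots> = (minv A * A) * W" using assoc_mult_mat[OF p(3) A W] by simp
  also have "\<dots> = W" using p(2) W by simp
  finally show ?thesis .
qed

lemma self_sprod_eq0:
  fixes v :: "real vec"
  assumes "v \<bullet> v = 0" shows "v = 0\<^sub>v (dim_vec v)"
proof (rule eq_vecI)
  fix i assume i: "i < dim_vec (0\<^sub>v (dim_vec v))"
  have "(\<Sum>j\<in>{0..<dim_vec v}. v $ j * v $ j) = 0" using assms by (simp add: scalar_prod_def)
  hence "\<forall>j\<in>{0..<dim_vec v}. v $ j * v $ j = 0" by (subst (asm) sum_nonneg_eq_0_iff) auto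
  thus "v $ i = 0\<^sub>v (dim_vec v) $ i" using i by auto
qed simp

lemma self_sprod_ge0: fixes v :: "real vec" shows "v \<bullet> v \<ge> 0"
  by (simp add: scalar_prod_def sum_nonneg)

lemma phi_det:
  fixes F :: "real mat"
  assumes F: "F \<in> carrier_mat R N" and s: "s > 0"
  shows "det (1\<^sub>m R + (1/s) \<cdot>\<^sub>m (F * transpose_mat F)) \<noteq> 0"
proof
  let ?P = "1\<^sub>m R + (1/s) \<cdot>\<^sub>m (F * transpose_mat F)"
  have P: "?P \<in> carrier_mat R R" using F by simp
  assume "det ?P = 0"
  then obtain v where v: "v \<in> carrier_vec R" "v \<noteq> 0\<^sub>v R" "?P *\<^sub>v v = 0\<^sub>v R"
    using det_0_iff_vec_prod_zero_field[OF P] by auto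
  define w where "w = transpose_mat F *\<^sub>v v"
  have w: "w \<in> carrier_vec N" using F v by (simp add: w_def)
  have Fw: "F *\<^sub>v w \<in> carrier_vec R" using F w by simp
  have "?P *\<^sub>v v = 1\<^sub>m R *\<^sub>v v + ((1/s) \<cdot>\<^sub>m (F * transpose_mat F)) *\<^sub>v v"
    using F v by (intro add_mult_distrib_mat_vec[of _ R R]) auto
  also have "\<dots> = v + (1/s) \<cdot>\<^sub>v (F *\<^sub>v w)"
    using F v unfolding w_def by (simp add: smult_mat_vec[of _ R R] assoc_mult_mat_vec[of _ R N _ R])
  finally have eq: "v + (1/s) \<cdot>\<^sub>v (F *\<^sub>v w) = 0\<^sub>v R" using v by simp
  have "0 = v \<bullet> (v + (1/s) \<cdot>\<^sub>v (F *\<^sub>v w))" using eq v by simp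
  also have "\<dots> = v \<bullet> v + (1/s) * (v \<bullet> (F *\<^sub>v w))"
    using v Fw by (simp add: scalar_prod_add_distrib[of _ R])
  also have "v \<bullet> (F *\<^sub>v w) = w \<bullet> w"
    using transpose_vec_mult_scalar[OF F w v(1)] unfolding w_def by simp
  finally have "v \<bullet> v + (1/s) * (w \<bullet> w) = 0" by simp
  moreover have "v \<bullet> v \<ge> 0" "w \<bullet> w \<ge> 0" by (rule self_sprod_ge0)+
  ultimately have "v \<bullet> v = 0" using s by (smt (verit) divide_nonneg_nonneg mult_nonneg_nonneg)
  from self_sprod_eq0[OF this] v show False by auto
qed




lemma msum_cong: "(\<And>m. m < k \<Longrightarrow> f m = g m) \<Longrightarrow> msum nr nc f k = msum nr nc g k"
  by (induct k) auto
lemma vsum_cong: "(\<And>m. m < k \<Longrightarrow> f m = g m) \<Longrightarrow> vsum nr f k = vsum nr g k"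
  by (induct k) auto

lemma vsum_transpose_mult:
  shows "(\<And>m. m < k \<Longrightarrow> G m \<in> carrier_mat R n) \<Longrightarrow> x \<in> carrier_vec R \<Longrightarrow>
    vsum n (\<lambda>m. transpose_mat (G m) *\<^sub>v x) k = transpose_mat (msum R n G k) *\<^sub>v x"
proof (induct k)
  case 0
  show ?case using 0 by (intro eq_vecI) (auto simp: scalar_prod_def)
next
  case (Suc k)
  note G = Suc.prems(1) and x = Suc.prems(2)
  have c1: "msum R n G k \<in> carrier_mat R n" using G by (intro msum_carrier) auto
  have c2: "G k \<in> carrier_mat R n" using G by auto
  have "vsum n (\<lambda>m. transpose_mat (G m) *\<^sub>v x) (Suc k) = transpose_mat (msum R n G k) *\<^sub>v x + transpose_mat (G k) *\<^sub>v x"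
    using Suc G x by simp
  also have "\<dots> = (transpose_mat (msum R n G k) + transpose_mat (G k)) *\<^sub>v x"
    using c1 c2 x by (intro add_mult_distrib_mat_vec[symmetric, of _ n R]) auto
  also have "transpose_mat (msum R n G k) + transpose_mat (G k) = transpose_mat (msum R n G (Suc k))"
    using c1 c2 by (simp add: transpose_add)
  finally show ?case .
qed

lemma off_eq: "m \<le> length Ds \<Longrightarrow> sum_list (map length (take m Ds)) = (\<Sum>i<m. length (Ds ! i))"
proof (induct Ds arbitrary: m)
  case (Cons d Ds)
  show ?case
  proof (cases m)
    case (Suc m')
    have "(\<Sum>i<Suc m'. length ((d # Ds) ! i)) = length d + (\<Sum>i<m'. length (Ds ! i))"
      by (subst sum.lessThan_Suc_shift) simp
    thus ?thesis using Cons Suc by simp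
  qed simp
qed simp

lemma len_concat: "length (concat Ds) = (\<Sum>i<length Ds. length (Ds ! i))"
  using off_eq[of "length Ds" Ds] by (simp add: length_concat)

lemma concat_nth: "m < length Ds \<Longrightarrow> i < length (Ds ! m) \<Longrightarrow>
  concat Ds ! ((\<Sum>k<m. length (Ds ! k)) + i) = Ds ! m ! i"
proof (induct Ds arbitrary: m)
  case (Cons d Ds)
  show ?case
  proof (cases m)
    case 0 thus ?thesis using Cons by (simp add: nth_append)
  next
    case (Suc m')
    have "(\<Sum>k<Suc m'. length ((d # Ds) ! k)) = length d + (\<Sum>k<m'. length (Ds ! k))"
      by (subst sum.lessThan_Suc_shift) simp
    thus ?thesis using Cons Suc by (simp add: nth_append add.assoc)
  qed
qed simp

lemma off_bound: "m < length Ds \<Longrightarrow> (\<Sum>k<m. length (Ds ! k)) + length (Ds ! m) \<le> length (concat Ds)"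
proof -
  assume m: "m < length Ds"
  have "(\<Sum>k<m. length (Ds ! k)) + length (Ds ! m) = (\<Sum>k<Suc m. length (Ds ! k))" by simp
  also have "\<dots> \<le> (\<Sum>k<length Ds. length (Ds ! k))" using m by (intro sum_mono2) auto
  finally show ?thesis by (simp add: len_concat)
qed

lemma col_block_full: "A \<in> carrier_mat nr N \<Longrightarrow> col_block A 0 N = A"
  by (intro eq_matI) (auto simp: col_block_def)
lemma row_block_full: "A \<in> carrier_mat N nc \<Longrightarrow> row_block A 0 N = A"
  by (intro eq_matI) (auto simp: row_block_def)
lemma vblock_full: "v \<in> carrier_vec N \<Longrightarrow> vblock v 0 N = v"
  by (intro eq_vecI) (auto simp: vblock_def)

lemma transpose_col_block: "off + L \<le> dim_col F \<Longrightarrow> transpose_mat (col_block F off L) = row_block (transpose_mat F) off L"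
  by (intro eq_matI) (auto simp: col_block_def row_block_def)




theorem theorem3:
  fixes \<mu> :: "'x \<Rightarrow> real" and \<sigma> :: "'x \<Rightarrow> 'x \<Rightarrow> real" and y :: "'x \<Rightarrow> real"
    and Ds :: "'x list list" and us :: "'x list"
    and \<sigma>n :: real and F :: "real mat" and R M :: nat
  assumes GP: "cov_kernel \<sigma>"
    and M: "length Ds = M" "M > 0"
    and D_distinct: "distinct (concat Ds)"
    and D_equal: "\<forall>m<M. length (Ds ! m) = length (concat Ds) div M"
    and U_distinct: "distinct us"
    and U_disj: "set us \<inter> set (concat Ds) = {}"
    and noise: "\<sigma>n\<^sup>2 > 0"
    and F_dim: "F \<in> carrier_mat R (length (concat Ds))"
    and F_ut: "upper_triangular F"
  shows
   "let ds = concat Ds; n = length us;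
        off = (\<lambda>m. sum_list (map length (take m Ds)));
        Fm = (\<lambda>m. col_block F (off m) (length (Ds ! m)));
        r = (\<lambda>m. vec_on y (Ds ! m) - vec_on \<mu> (Ds ! m));
        ydot = (\<lambda>m. Fm m *\<^sub>v r m);
        Sdot = (\<lambda>m. Fm m * cov_mat \<sigma> (Ds ! m) us);
        Phim = (\<lambda>m. Fm m * transpose_mat (Fm m));
        Phi = 1\<^sub>m R + (1 / \<sigma>n\<^sup>2) \<cdot>\<^sub>m msum R R Phim M;
        yddot = minv Phi *\<^sub>v vsum R ydot M;
        Sddot = minv Phi * msum R n Sdot M;
        mut = (\<lambda>m. (1 / \<sigma>n\<^sup>2) \<cdot>\<^sub>v (cov_mat \<sigma> us (Ds ! m) *\<^sub>v r m)
                   - (1 / \<sigma>n ^ 4) \<cdot>\<^sub>v (transpose_mat (Sdot m) *\<^sub>v yddot));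
        St = (\<lambda>m. (1 / \<sigma>n\<^sup>2) \<cdot>\<^sub>m (cov_mat \<sigma> us (Ds ! m) * cov_mat \<sigma> (Ds ! m) us)
                   - (1 / \<sigma>n ^ 4) \<cdot>\<^sub>m (transpose_mat (Sdot m) * Sddot));
        mu_tilde = vec_on \<mu> us + vsum n mut M;
        Sigma_tilde = cov_mat \<sigma> us us - msum n n St M;
        K = transpose_mat F * F + \<sigma>n\<^sup>2 \<cdot>\<^sub>m 1\<^sub>m (length ds);
        mu_ICF = vec_on \<mu> us + cov_mat \<sigma> us ds *\<^sub>v (minv K *\<^sub>v (vec_on y ds - vec_on \<mu> ds));
        Sigma_ICF = cov_mat \<sigma> us us - cov_mat \<sigma> us ds * minv K * cov_mat \<sigma> ds us
    in mu_tilde = mu_ICF \<and> Sigma_tilde = Sigma_ICF"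
proof -
  define ds where "ds = concat Ds"
  define n where "n = length us"
  define off where "off = (\<lambda>m. sum_list (map length (take m Ds)))"
  define Fm where "Fm = (\<lambda>m. col_block F (off m) (length (Ds ! m)))"
  define r where "r = (\<lambda>m. vec_on y (Ds ! m) - vec_on \<mu> (Ds ! m))"
  define ydot where "ydot = (\<lambda>m. Fm m *\<^sub>v r m)"
  define Sdot where "Sdot = (\<lambda>m. Fm m * cov_mat \<sigma> (Ds ! m) us)"
  define Phim where "Phim = (\<lambda>m. Fm m * transpose_mat (Fm m))"
  define Phi where "Phi = 1\<^sub>m R + (1 / \<sigma>n\<^sup>2) \<cdot>\<^sub>m msum R R Phim M"
  define yddot where "yddot = minv Phi *\<^sub>v vsum R ydot M"
  define Sddot where "Sddot = minv Phi * msum R n Sdot M"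
  define mut where "mut = (\<lambda>m. (1 / \<sigma>n\<^sup>2) \<cdot>\<^sub>v (cov_mat \<sigma> us (Ds ! m) *\<^sub>v r m)
                   - (1 / \<sigma>n ^ 4) \<cdot>\<^sub>v (transpose_mat (Sdot m) *\<^sub>v yddot))"
  define St where "St = (\<lambda>m. (1 / \<sigma>n\<^sup>2) \<cdot>\<^sub>m (cov_mat \<sigma> us (Ds ! m) * cov_mat \<sigma> (Ds ! m) us)
                   - (1 / \<sigma>n ^ 4) \<cdot>\<^sub>m (transpose_mat (Sdot m) * Sddot))"
  define mu_tilde where "mu_tilde = vec_on \<mu> us + vsum n mut M"
  define Sigma_tilde where "Sigma_tilde = cov_mat \<sigma> us us - msum n n St M"
  define K where "K = transpose_mat F * F + \<sigma>n\<^sup>2 \<cdot>\<^sub>m 1\<^sub>m (length ds)"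
  define mu_ICF where "mu_ICF = vec_on \<mu> us + cov_mat \<sigma> us ds *\<^sub>v (minv K *\<^sub>v (vec_on y ds - vec_on \<mu> ds))"
  define Sigma_ICF where "Sigma_ICF = cov_mat \<sigma> us us - cov_mat \<sigma> us ds * minv K * cov_mat \<sigma> ds us"
  define N where "N = length ds"
  define L where "L = (\<lambda>m. length (Ds ! m))"
  define po where "po = (\<lambda>m. \<Sum>i<m. L i)"
  define A where "A = cov_mat \<sigma> us ds"
  define B where "B = cov_mat \<sigma> ds us"
  define v where "v = vec_on y ds - vec_on \<mu> ds"
  define s where "s = \<sigma>n\<^sup>2"
  have s0: "s > 0" using noise by (simp add: s_def)
  have s4: "\<sigma>n ^ 4 = s^2" by (simp add: s_def power_mult[symmetric])
  have A: "A \<in> carrier_mat n N" by (simp add: A_def cov_mat_def n_def N_def)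
  have B: "B \<in> carrier_mat N n" by (simp add: B_def cov_mat_def n_def N_def)
  have v: "v \<in> carrier_vec N" by (simp add: v_def vec_on_def N_def)
  have Fc: "F \<in> carrier_mat R N" using F_dim by (simp add: N_def ds_def)
  have off_po: "\<And>m. m \<le> M \<Longrightarrow> off m = po m" unfolding off_def po_def L_def using M(1) off_eq by auto
  have N_po: "N = po M"
  proof -
    have "N = (\<Sum>i<length Ds. length (Ds ! i))" unfolding N_def ds_def by (rule len_concat)
    thus ?thesis unfolding po_def L_def M(1) .
  qed
  have bound: "\<And>m. m < M \<Longrightarrow> po m + L m \<le> N"
    unfolding po_def L_def N_def ds_def using off_bound M(1) by auto
  have nth: "\<And>m i. m < M \<Longrightarrow> i < L m \<Longrightarrow> ds ! (po m + i) = Ds ! m ! i"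
    unfolding po_def L_def ds_def using concat_nth M(1) by auto
  have symB: "transpose_mat B = A"
    using GP unfolding cov_kernel_def A_def B_def by (intro eq_matI) (auto simp: cov_mat_def)
  have Fm_eq: "\<And>m. m < M \<Longrightarrow> Fm m = col_block F (po m) (L m)"
    unfolding Fm_def L_def using off_po by simp
  have FmT: "\<And>m. m < M \<Longrightarrow> transpose_mat (Fm m) = row_block (transpose_mat F) (po m) (L m)"
    using Fm_eq bound Fc by (simp add: transpose_col_block)
  have covDU: "\<And>m. m < M \<Longrightarrow> cov_mat \<sigma> (Ds ! m) us = row_block B (po m) (L m)"
  proof -
    fix m assume m: "m < M"
    show "cov_mat \<sigma> (Ds ! m) us = row_block B (po m) (L m)"
      using nth[OF m] bound[OF m] unfolding B_def
      by (intro eq_matI) (auto simp: cov_mat_def row_block_def L_def N_def)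
  qed
  have covUD: "\<And>m. m < M \<Longrightarrow> cov_mat \<sigma> us (Ds ! m) = col_block A (po m) (L m)"
  proof -
    fix m assume m: "m < M"
    show "cov_mat \<sigma> us (Ds ! m) = col_block A (po m) (L m)"
      using nth[OF m] bound[OF m] unfolding A_def
      by (intro eq_matI) (auto simp: cov_mat_def col_block_def L_def N_def)
  qed
  have r_eq: "\<And>m. m < M \<Longrightarrow> r m = vblock v (po m) (L m)"
  proof -
    fix m assume m: "m < M"
    show "r m = vblock v (po m) (L m)"
      using nth[OF m] bound[OF m] unfolding v_def r_def
      by (intro eq_vecI) (auto simp: vec_on_def vblock_def L_def N_def)
  qed
  have S1: "msum R R Phim M = F * transpose_mat F"
  proof -
    have "msum R R Phim M = msum R R (\<lambda>m. col_block F (po m) (L m) * row_block (transpose_mat F) (po m) (L m)) M"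
      by (rule msum_cong) (simp add: Phim_def FmT[symmetric] Fm_eq)
    also have "\<dots> = col_block F 0 N * row_block (transpose_mat F) 0 N"
      unfolding po_def N_po using msum_block[of F R "transpose_mat F" R L M] Fc by (simp add: po_def)
    also have "\<dots> = F * transpose_mat F" using Fc by (simp add: col_block_full row_block_full)
    finally show ?thesis .
  qed
  have S2: "vsum R ydot M = F *\<^sub>v v"
  proof -
    have "vsum R ydot M = vsum R (\<lambda>m. col_block F (po m) (L m) *\<^sub>v vblock v (po m) (L m)) M"
      by (rule vsum_cong) (simp add: ydot_def Fm_eq r_eq)
    also have "\<dots> = col_block F 0 N *\<^sub>v vblock v 0 N"
      unfolding po_def N_po using vsum_block[of F R L v M] Fc by (simp add: po_def)
    also have "\<dots> = F *\<^sub>v v" using Fc v by (simp add: col_block_full vblock_full)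
    finally show ?thesis .
  qed
  have S3: "msum R n Sdot M = F * B"
  proof -
    have "msum R n Sdot M = msum R n (\<lambda>m. col_block F (po m) (L m) * row_block B (po m) (L m)) M"
      by (rule msum_cong) (simp add: Sdot_def Fm_eq covDU)
    also have "\<dots> = col_block F 0 N * row_block B 0 N"
      unfolding po_def N_po using msum_block[of F R B n L M] Fc B by (simp add: po_def)
    also have "\<dots> = F * B" using Fc B by (simp add: col_block_full row_block_full)
    finally show ?thesis .
  qed
  have S4: "vsum n (\<lambda>m. cov_mat \<sigma> us (Ds ! m) *\<^sub>v r m) M = A *\<^sub>v v"
  proof -
    have "vsum n (\<lambda>m. cov_mat \<sigma> us (Ds ! m) *\<^sub>v r m) M = vsum n (\<lambda>m. col_block A (po m) (L m) *\<^sub>v vblock v (po m) (L m)) M"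
      by (rule vsum_cong) (simp add: covUD r_eq)
    also have "\<dots> = col_block A 0 N *\<^sub>v vblock v 0 N"
      unfolding po_def N_po using vsum_block[of A n L v M] A by (simp add: po_def)
    also have "\<dots> = A *\<^sub>v v" using A v by (simp add: col_block_full vblock_full)
    finally show ?thesis .
  qed
  have S5: "msum n n (\<lambda>m. cov_mat \<sigma> us (Ds ! m) * cov_mat \<sigma> (Ds ! m) us) M = A * B"
  proof -
    have "msum n n (\<lambda>m. cov_mat \<sigma> us (Ds ! m) * cov_mat \<sigma> (Ds ! m) us) M = msum n n (\<lambda>m. col_block A (po m) (L m) * row_block B (po m) (L m)) M"
      by (rule msum_cong) (simp add: covUD covDU)
    also have "\<dots> = col_block A 0 N * row_block B 0 N"
      unfolding po_def N_po using msum_block[of A n B n L M] A B by (simp add: po_def)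
    also have "\<dots> = A * B" using A B by (simp add: col_block_full row_block_full)
    finally show ?thesis .
  qed
  have Fm_c: "\<And>m. m < M \<Longrightarrow> Fm m \<in> carrier_mat R (L m)" using Fm_eq Fc by (simp add: col_block_def)
  have r_c: "\<And>m. m < M \<Longrightarrow> r m \<in> carrier_vec (L m)" by (simp add: r_def vec_on_def L_def)
  have UD_c: "\<And>m. m < M \<Longrightarrow> cov_mat \<sigma> us (Ds ! m) \<in> carrier_mat n (L m)" by (simp add: cov_mat_def L_def n_def)
  have DU_c: "\<And>m. m < M \<Longrightarrow> cov_mat \<sigma> (Ds ! m) us \<in> carrier_mat (L m) n" by (simp add: cov_mat_def L_def n_def)
  have Sdot_c: "\<And>m. m < M \<Longrightarrow> Sdot m \<in> carrier_mat R n"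
    unfolding Sdot_def using Fm_c DU_c by (meson mult_carrier_mat)
  define P where "P = minv Phi"
  have Phi_eq: "Phi = 1\<^sub>m R + (1/s) \<cdot>\<^sub>m (F * transpose_mat F)" unfolding Phi_def S1 s_def ..
  have Phi_c: "Phi \<in> carrier_mat R R" using Fc unfolding Phi_eq by simp
  have Pprops: "Phi * P = 1\<^sub>m R" "P \<in> carrier_mat R R"
    using minv_props[OF Phi_c] phi_det[OF Fc s0] unfolding P_def Phi_eq by auto
  define W where "W = (1/s) \<cdot>\<^sub>m 1\<^sub>m N - (1/s^2) \<cdot>\<^sub>m (transpose_mat F * P * F)"
  have W: "W \<in> carrier_mat N N" using Fc Pprops by (simp add: W_def)
  have KW: "minv K = W"
  proof (rule minv_eq)
    show "K \<in> carrier_mat N N" using Fc by (simp add: K_def N_def)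
    show "W \<in> carrier_mat N N" by (rule W)
    show "K * W = 1\<^sub>m N" unfolding K_def W_def s_def[symmetric] N_def[symmetric]
      using wood[OF Fc Pprops(2)] s0 Pprops(1) unfolding Phi_eq by simp
  qed
  have yddot_eq: "yddot = P *\<^sub>v (F *\<^sub>v v)" unfolding yddot_def P_def S2 ..
  have Sddot_eq: "Sddot = P * (F * B)" unfolding Sddot_def P_def S3 ..
  define Ft where "Ft = transpose_mat F"
  have Ft: "Ft \<in> carrier_mat N R" using Fc by (simp add: Ft_def)
  have FBT: "transpose_mat (F * B) = A * Ft"
    using transpose_mult[OF Fc B] symB by (simp add: Ft_def)
  define z where "z = P *\<^sub>v (F *\<^sub>v v)"
  have z: "z \<in> carrier_vec R" using Pprops Fc v by (simp add: z_def)
  have yd: "yddot \<in> carrier_vec R" using z yddot_eq z_def by simp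
  have mut_sum: "vsum n mut M = (1/s) \<cdot>\<^sub>v (A *\<^sub>v v) - (1/s^2) \<cdot>\<^sub>v ((A * Ft) *\<^sub>v z)"
  proof -
    have "vsum n mut M = vsum n (\<lambda>m. (1/s) \<cdot>\<^sub>v (cov_mat \<sigma> us (Ds ! m) *\<^sub>v r m) - (1/s^2) \<cdot>\<^sub>v (transpose_mat (Sdot m) *\<^sub>v yddot)) M"
      by (rule vsum_cong) (simp add: mut_def s_def[symmetric] s4)
    also have "\<dots> = (1/s) \<cdot>\<^sub>v vsum n (\<lambda>m. cov_mat \<sigma> us (Ds ! m) *\<^sub>v r m) M - (1/s^2) \<cdot>\<^sub>v vsum n (\<lambda>m. transpose_mat (Sdot m) *\<^sub>v yddot) M"
    proof (rule vsum_diff)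
      fix m assume m: "m < M"
      show "cov_mat \<sigma> us (Ds ! m) *\<^sub>v r m \<in> carrier_vec n" using UD_c[OF m] r_c[OF m] by simp
      show "transpose_mat (Sdot m) *\<^sub>v yddot \<in> carrier_vec n" using Sdot_c[OF m] yd by simp
    qed
    also have "vsum n (\<lambda>m. transpose_mat (Sdot m) *\<^sub>v yddot) M = transpose_mat (F * B) *\<^sub>v yddot"
      using vsum_transpose_mult[of M Sdot R n yddot] Sdot_c yd S3 by simp
    finally show ?thesis unfolding S4 FBT yddot_eq z_def .
  qed
  have mean: "mu_tilde = mu_ICF"
  proof -
    have c1: "(1/s) \<cdot>\<^sub>m 1\<^sub>m N \<in> carrier_mat N N" "(1/s^2) \<cdot>\<^sub>m (Ft * P * F) \<in> carrier_mat N N"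
      using Ft Pprops Fc by auto
    have "W *\<^sub>v v = ((1/s) \<cdot>\<^sub>m 1\<^sub>m N) *\<^sub>v v - ((1/s^2) \<cdot>\<^sub>m (Ft * P * F)) *\<^sub>v v"
      unfolding W_def Ft_def[symmetric] using minus_mult_distrib_mat_vec[OF c1 v] .
    also have "\<dots> = (1/s) \<cdot>\<^sub>v v - (1/s^2) \<cdot>\<^sub>v ((Ft * P * F) *\<^sub>v v)"
      using Ft Pprops Fc v
      by (simp add: smult_mat_vec[of _ N N] smult_mat_vec[of "Ft * P * F" N N])
    also have "(Ft * P * F) *\<^sub>v v = Ft *\<^sub>v z"
    proof -
      have PF: "P * F \<in> carrier_mat R N" using Pprops Fc by simp
      have "(Ft * P * F) *\<^sub>v v = (Ft * (P * F)) *\<^sub>v v" using assoc_mult_mat[OF Ft Pprops(2) Fc] by simp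
      also have "\<dots> = Ft *\<^sub>v ((P * F) *\<^sub>v v)" by (rule assoc_mult_mat_vec[OF Ft PF v])
      also have "(P * F) *\<^sub>v v = z" unfolding z_def by (rule assoc_mult_mat_vec[OF Pprops(2) Fc v])
      finally show ?thesis .
    qed
    finally have Wv: "W *\<^sub>v v = (1/s) \<cdot>\<^sub>v v - (1/s^2) \<cdot>\<^sub>v (Ft *\<^sub>v z)" .
    have c2: "(1/s) \<cdot>\<^sub>v v \<in> carrier_vec N" "(1/s^2) \<cdot>\<^sub>v (Ft *\<^sub>v z) \<in> carrier_vec N" using v Ft z by auto
    have "A *\<^sub>v (W *\<^sub>v v) = A *\<^sub>v ((1/s) \<cdot>\<^sub>v v) - A *\<^sub>v ((1/s^2) \<cdot>\<^sub>v (Ft *\<^sub>v z))"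
      unfolding Wv using mult_minus_distrib_mat_vec[OF A c2] .
    also have "\<dots> = (1/s) \<cdot>\<^sub>v (A *\<^sub>v v) - (1/s^2) \<cdot>\<^sub>v ((A * Ft) *\<^sub>v z)"
      using A Ft v z by (simp add: mult_mat_vec[of _ n N])
    finally have "A *\<^sub>v (W *\<^sub>v v) = (1/s) \<cdot>\<^sub>v (A *\<^sub>v v) - (1/s^2) \<cdot>\<^sub>v ((A * Ft) *\<^sub>v z)" .
    thus ?thesis unfolding mu_tilde_def mu_ICF_def mut_sum KW A_def[symmetric] v_def[symmetric] by simp
  qed
  have St_sum: "msum n n St M = (1/s) \<cdot>\<^sub>m (A * B) - (1/s^2) \<cdot>\<^sub>m ((A * Ft) * (P * (F * B)))"
  proof -
    have "msum n n St M = msum n n (\<lambda>m. (1/s) \<cdot>\<^sub>m (cov_mat \<sigma> us (Ds ! m) * cov_mat \<sigma> (Ds ! m) us) - (1/s^2) \<cdot>\<^sub>m (transpose_mat (Sdot m) * Sddot)) M"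
      by (rule msum_cong) (simp add: St_def s_def[symmetric] s4)
    also have "\<dots> = (1/s) \<cdot>\<^sub>m msum n n (\<lambda>m. cov_mat \<sigma> us (Ds ! m) * cov_mat \<sigma> (Ds ! m) us) M - (1/s^2) \<cdot>\<^sub>m msum n n (\<lambda>m. transpose_mat (Sdot m) * Sddot) M"
    proof (rule msum_diff)
      fix m assume m: "m < M"
      show "cov_mat \<sigma> us (Ds ! m) * cov_mat \<sigma> (Ds ! m) us \<in> carrier_mat n n" using UD_c[OF m] DU_c[OF m] by simp
      show "transpose_mat (Sdot m) * Sddot \<in> carrier_mat n n" using Sdot_c[OF m] Pprops Fc B Sddot_eq by simp
    qed
    also have "msum n n (\<lambda>m. transpose_mat (Sdot m) * Sddot) M = transpose_mat (F * B) * Sddot"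
      using msum_transpose_mult[of M Sdot R n Sddot n] Sdot_c Pprops Fc B Sddot_eq S3 by simp
    finally show ?thesis unfolding S5 FBT Sddot_eq .
  qed
  have cov: "Sigma_tilde = Sigma_ICF"
  proof -
    have c1: "(1/s) \<cdot>\<^sub>m 1\<^sub>m N \<in> carrier_mat N N" "(1/s^2) \<cdot>\<^sub>m (Ft * P * F) \<in> carrier_mat N N"
      using Ft Pprops Fc by auto
    have "A * W = A * ((1/s) \<cdot>\<^sub>m 1\<^sub>m N) - A * ((1/s^2) \<cdot>\<^sub>m (Ft * P * F))"
      unfolding W_def Ft_def[symmetric] using mult_minus_distrib_mat[OF A c1] .
    also have "\<dots> = (1/s) \<cdot>\<^sub>m A - (1/s^2) \<cdot>\<^sub>m (A * (Ft * P * F))"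
    proof -
      have Q: "Ft * P * F \<in> carrier_mat N N" using Ft Pprops Fc by simp
      show ?thesis unfolding mult_smult_distrib[OF A one_carrier_mat] mult_smult_distrib[OF A Q] right_mult_one_mat[OF A] ..
    qed
    finally have AW: "A * W = (1/s) \<cdot>\<^sub>m A - (1/s^2) \<cdot>\<^sub>m (A * (Ft * P * F))" .
    have c2: "(1/s) \<cdot>\<^sub>m A \<in> carrier_mat n N" "(1/s^2) \<cdot>\<^sub>m (A * (Ft * P * F)) \<in> carrier_mat n N"
      using A Ft Pprops Fc by auto
    have "A * W * B = ((1/s) \<cdot>\<^sub>m A) * B - ((1/s^2) \<cdot>\<^sub>m (A * (Ft * P * F))) * B"
      unfolding AW using minus_mult_distrib_mat[OF c2 B] .
    also have "\<dots> = (1/s) \<cdot>\<^sub>m (A * B) - (1/s^2) \<cdot>\<^sub>m ((A * Ft) * (P * (F * B)))"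
    proof -
      have PF: "P * F \<in> carrier_mat R N" using Pprops Fc by simp
      have AFt: "A * Ft \<in> carrier_mat n R" using A Ft by simp
      have Q: "A * (Ft * P * F) \<in> carrier_mat n N" using A Ft Pprops Fc by simp
      have "A * (Ft * P * F) = A * (Ft * (P * F))" using assoc_mult_mat[OF Ft Pprops(2) Fc] by simp
      also have "\<dots> = (A * Ft) * (P * F)" using assoc_mult_mat[OF A Ft PF] by simp
      finally have e1: "A * (Ft * P * F) * B = (A * Ft) * (P * F) * B" by simp
      also have "\<dots> = (A * Ft) * ((P * F) * B)" using assoc_mult_mat[OF AFt PF B] .
      also have "(P * F) * B = P * (F * B)" using assoc_mult_mat[OF Pprops(2) Fc B] .
      finally have as: "A * (Ft * P * F) * B = (A * Ft) * (P * (F * B))" .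
      show ?thesis unfolding mult_smult_assoc_mat[OF A B] mult_smult_assoc_mat[OF Q B] as ..
    qed
    finally have "A * W * B = (1/s) \<cdot>\<^sub>m (A * B) - (1/s^2) \<cdot>\<^sub>m ((A * Ft) * (P * (F * B)))" .
    thus ?thesis unfolding Sigma_tilde_def Sigma_ICF_def St_sum KW A_def[symmetric] B_def[symmetric] by simp
  qed
  have main: "mu_tilde = mu_ICF \<and> Sigma_tilde = Sigma_ICF" using mean cov by simp
  show ?thesis
    using main unfolding Let_def ds_def n_def off_def Fm_def r_def ydot_def Sdot_def Phim_def Phi_def
      yddot_def Sddot_def mut_def St_def mu_tilde_def Sigma_tilde_def K_def mu_ICF_def Sigma_ICF_def .
qed


end
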